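(* Let $X_t$ and $Y_t$ be two independent real-valued Lévy processes and assume $X_t$ has the local coupling property. Then the Lévy process $X_t+Y_t$ has the local coupling property.
   Context: A real-valued Lévy process is regarded as a Markov process on $\mathbb{R}$. The local coupling property: for every $x\in\mathbb{R}$ and $\epsilon>0$ there exists $\delta>0$ such that for every $y$ with $|y-x|<\delta$ there is a coupling $(X_t,Y_t)$ of the laws of the process started at $x$ and at $y$, such that $T=\inf\{t\ge0:X_t=Y_t\}$ satisfies $P(T>\epsilon)<\epsilon$. *)

theory Defs
  imports "HOL-Probability.Probability"
begin

text \<open>Real-valued stochastic processes are functions  real => 'a => real  on a
  probability space; only times t >= 0 are relevant.\<close>

definition cadlag :: "(real \<Rightarrow> real) \<Rightarrow> bool" where
  "cadlag f \<longleftrightarrow>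
     (\<forall>t\<ge>0. continuous (at_right t) f) \<and>
     (\<forall>t>0. \<exists>l. (f \<longlongrightarrow> l) (at_left t))"

definition levy_process :: "'a measure \<Rightarrow> (real \<Rightarrow> 'a \<Rightarrow> real) \<Rightarrow> bool" where
  "levy_process M X \<longleftrightarrow>
     prob_space M \<and>
     (\<forall>t\<ge>0. X t \<in> borel_measurable M) \<and>
     (AE \<omega> in M. X 0 \<omega> = 0) \<and>
     \<comment> \<open>independent increments\<close>
     (\<forall>(n::nat) (s::nat \<Rightarrow> real). 0 \<le> s 0 \<and> (\<forall>i<n. s i < s (Suc i)) \<longrightarrow>
        prob_space.indep_vars M (\<lambda>_. borel)
          (\<lambda>i \<omega>. X (s (Suc i)) \<omega> - X (s i) \<omega>) {..<n}) \<and>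
     \<comment> \<open>stationary increments\<close>
     (\<forall>s t. 0 \<le> s \<and> s \<le> t \<longrightarrow>
        distr M borel (\<lambda>\<omega>. X t \<omega> - X s \<omega>) = distr M borel (X (t - s))) \<and>
     \<comment> \<open>stochastic continuity\<close>
     (\<forall>e>0. ((\<lambda>t. measure M {\<omega>\<in>space M. \<bar>X t \<omega>\<bar> > e}) \<longlongrightarrow> 0) (at_right 0)) \<and>
     \<comment> \<open>cadlag paths (almost surely)\<close>
     (AE \<omega> in M. cadlag (\<lambda>t. X t \<omega>))"

definition same_law ::
  "'b measure \<Rightarrow> (real \<Rightarrow> 'b \<Rightarrow> real) \<Rightarrow> 'a measure \<Rightarrow> (real \<Rightarrow> 'a \<Rightarrow> real) \<Rightarrow> bool" where
  "same_law N Z M W \<longleftrightarrow>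
     (\<forall>t\<ge>0. Z t \<in> borel_measurable N) \<and> (\<forall>t\<ge>0. W t \<in> borel_measurable M) \<and>
     (\<forall>J. finite J \<and> J \<subseteq> {0..} \<longrightarrow>
        distr N (PiM J (\<lambda>_. borel)) (\<lambda>\<omega>. \<lambda>t\<in>J. Z t \<omega>) =
        distr M (PiM J (\<lambda>_. borel)) (\<lambda>\<omega>. \<lambda>t\<in>J. W t \<omega>))"

text \<open>Coupling time T = inf {t >= 0. Xc t = Yc t} (infimum of the empty set is \<infinity>).\<close>
definition coupling_time :: "(real \<Rightarrow> 'b \<Rightarrow> real) \<Rightarrow> (real \<Rightarrow> 'b \<Rightarrow> real) \<Rightarrow> 'b \<Rightarrow> ereal" where
  "coupling_time Xc Yc \<omega> = Inf {ereal t | t. t \<ge> 0 \<and> Xc t \<omega> = Yc t \<omega>}"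

text \<open>The coupling lives on a probability space whose sample space is the
  type of pairs of paths (with an arbitrary sigma-algebra), which is general enough to
  carry the push-forward of any coupling.  The coupled processes have (a.s.) cadlag paths,
  as they are distributed on path space like the Levy process.\<close>
definition good_coupling_exists ::
  "'a measure \<Rightarrow> (real \<Rightarrow> 'a \<Rightarrow> real) \<Rightarrow> real \<Rightarrow> real \<Rightarrow> real \<Rightarrow> bool" where
  "good_coupling_exists M L x y e \<longleftrightarrow>
     (\<exists>(N :: ((real \<Rightarrow> real) \<times> (real \<Rightarrow> real)) measure) Xc Yc.
        prob_space N \<and>
        same_law N Xc M (\<lambda>t \<omega>. x + L t \<omega>) \<and>
        same_law N Yc M (\<lambda>t \<omega>. y + L t \<omega>) \<and>
        (AE \<omega> in N. cadlag (\<lambda>t. Xc t \<omega>) \<and> cadlag (\<lambda>t. Yc t \<omega>)) \<and>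
        {\<omega>\<in>space N. coupling_time Xc Yc \<omega> > ereal e} \<in> sets N \<and>
        measure N {\<omega>\<in>space N. coupling_time Xc Yc \<omega> > ereal e} < e)"

definition local_coupling_property :: "'a measure \<Rightarrow> (real \<Rightarrow> 'a \<Rightarrow> real) \<Rightarrow> bool" where
  "local_coupling_property M L \<longleftrightarrow>
     (\<forall>x e. e > 0 \<longrightarrow>
        (\<exists>\<delta>>0. \<forall>y. \<bar>y - x\<bar> < \<delta> \<longrightarrow> good_coupling_exists M L x y e))"

definition path_of :: "(real \<Rightarrow> 'a \<Rightarrow> real) \<Rightarrow> 'a \<Rightarrow> real \<Rightarrow> real" where
  "path_of X \<omega> = (\<lambda>t\<in>{0..}. X t \<omega>)"

end

theory Submission
  imports Defs
begin

lemma law_sum: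
  fixes M :: "'a measure" and N1 :: "'b measure"
  assumes PM: "prob_space M" and PN1: "prob_space N1"
    and SL: "same_law N1 Z M (\<lambda>t \<omega>. c + X t \<omega>)"
    and Ym: "\<forall>t\<ge>0. Y t \<in> borel_measurable M"
    and ind: "prob_space.indep_var M (PiM {0..} (\<lambda>_. borel)) (path_of X)
                                (PiM {0..} (\<lambda>_. borel)) (path_of Y)"
    and J: "finite J" "J \<subseteq> {0..}"
  shows "distr (N1 \<Otimes>\<^sub>M M) (PiM J (\<lambda>_. borel)) (\<lambda>q. \<lambda>t\<in>J. Z t (fst q) + Y t (snd q))
       = distr M (PiM J (\<lambda>_. borel)) (\<lambda>\<omega>. \<lambda>t\<in>J. c + (X t \<omega> + Y t \<omega>))"
proof -
  interpret M: prob_space M by fact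
  interpret N1: prob_space N1 by fact
  define K where "K = PiM J (\<lambda>_. borel :: real measure)"
  define add where "add = (\<lambda>p::(real\<Rightarrow>real)\<times>(real\<Rightarrow>real). \<lambda>t\<in>J. fst p t + snd p t)"
  define ZJ where "ZJ = (\<lambda>\<omega>. \<lambda>t\<in>J. Z t \<omega>)"
  define YJ where "YJ = (\<lambda>\<omega>. \<lambda>t\<in>J. Y t \<omega>)"
  define XJ where "XJ = (\<lambda>\<omega>. \<lambda>t\<in>J. c + X t \<omega>)"
  have Zm: "\<And>t. t \<in> J \<Longrightarrow> Z t \<in> borel_measurable N1" using SL J unfolding same_law_def by auto
  have addm: "add \<in> measurable (K \<Otimes>\<^sub>M K) K"
    unfolding add_def K_def
    by (rule measurable_restrict) measurable
  have ZJm: "ZJ \<in> measurable N1 K" unfolding ZJ_def K_def using Zm by (auto intro!: measurable_restrict)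
  have YJm: "YJ \<in> measurable M K" unfolding YJ_def K_def using Ym J by (auto intro!: measurable_restrict)
  have lawZ: "distr N1 K ZJ = distr M K XJ"
    using SL J unfolding same_law_def ZJ_def XJ_def K_def by auto
  define g where "g = (\<lambda>p::real\<Rightarrow>real. \<lambda>t\<in>J. c + p t)"
  define h where "h = (\<lambda>p::real\<Rightarrow>real. \<lambda>t\<in>J. p t)"
  have gm: "g \<in> measurable (PiM {0..} (\<lambda>_. borel)) K"
    unfolding g_def K_def using J by (auto intro!: measurable_restrict)
  have hm: "h \<in> measurable (PiM {0..} (\<lambda>_. borel)) K"
    unfolding h_def K_def using J by (auto intro!: measurable_restrict)
  have XJeq: "XJ = g \<circ> path_of X" unfolding XJ_def g_def path_of_def using J by (auto intro!: ext)
  have YJeq: "YJ = h \<circ> path_of Y" unfolding YJ_def h_def path_of_def using J by (auto intro!: ext)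
  have indJ: "M.indep_var K XJ K YJ"
    unfolding XJeq YJeq by (rule M.indep_var_compose[OF ind gm hm])
  have prodeq: "distr M K XJ \<Otimes>\<^sub>M distr M K YJ = distr M (K \<Otimes>\<^sub>M K) (\<lambda>x. (XJ x, YJ x))"
    using indJ M.indep_var_distribution_eq by blast
  have XJm: "XJ \<in> measurable M K" using indJ M.indep_var_rv1 by blast
  have sf: "sigma_finite_measure (distr M K YJ)"
    using M.prob_space_distr[OF YJm] prob_space_imp_sigma_finite by blast
  have "distr (N1 \<Otimes>\<^sub>M M) K (\<lambda>q. \<lambda>t\<in>J. Z t (fst q) + Y t (snd q))
      = distr (N1 \<Otimes>\<^sub>M M) K (add \<circ> (\<lambda>(x, y). (ZJ x, YJ y)))"
    by (rule distr_cong) (auto simp: add_def ZJ_def YJ_def split_beta)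
  also have "\<dots> = distr (distr (N1 \<Otimes>\<^sub>M M) (K \<Otimes>\<^sub>M K) (\<lambda>(x, y). (ZJ x, YJ y))) K add"
    by (rule distr_distr[symmetric, OF addm]) (use ZJm YJm in measurable)
  also have "\<dots> = distr (distr N1 K ZJ \<Otimes>\<^sub>M distr M K YJ) K add"
    using pair_measure_distr[OF ZJm YJm sf] by simp
  also have "\<dots> = distr (distr M (K \<Otimes>\<^sub>M K) (\<lambda>x. (XJ x, YJ x))) K add"
    unfolding lawZ prodeq ..
  also have "\<dots> = distr M K (add \<circ> (\<lambda>x. (XJ x, YJ x)))"
    by (rule distr_distr[OF addm]) (use XJm YJm in measurable)
  also have "\<dots> = distr M K (\<lambda>\<omega>. \<lambda>t\<in>J. c + (X t \<omega> + Y t \<omega>))"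
    by (rule distr_cong) (auto simp: add_def XJ_def YJ_def)
  finally show ?thesis unfolding K_def .
qed

lemma cadlag_add: "cadlag f \<Longrightarrow> cadlag g \<Longrightarrow> cadlag (\<lambda>t. f t + g t)"
  unfolding cadlag_def
  by (metis (full_types) continuous_add tendsto_add)

lemma transfer_law:
  fixes M :: "'a measure" and N1 :: "'b measure" and S :: "'c measure"
  assumes PM: "prob_space M" and PN1: "prob_space N1"
    and SL: "same_law N1 Z M (\<lambda>t \<omega>. c + X t \<omega>)"
    and Ym: "\<forall>t\<ge>0. Y t \<in> borel_measurable M"
    and Xm: "\<forall>t\<ge>0. X t \<in> borel_measurable M"
    and ind: "prob_space.indep_var M (PiM {0..} (\<lambda>_. borel)) (path_of X)
                                (PiM {0..} (\<lambda>_. borel)) (path_of Y)"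
    and fm: "f \<in> measurable (completion (N1 \<Otimes>\<^sub>M M)) S"
    and Sgen: "\<And>A. f -` A \<inter> space (completion (N1 \<Otimes>\<^sub>M M)) \<in> sets (completion (N1 \<Otimes>\<^sub>M M)) \<Longrightarrow> A \<in> sets S"
    and spS: "space S = UNIV"
    and prjf: "\<And>q t. prj (f q) t = Z t (fst q) + Y t (snd q)"
  shows "same_law (distr (completion (N1 \<Otimes>\<^sub>M M)) S f) (\<lambda>t p. prj p t) M (\<lambda>t \<omega>. c + (X t \<omega> + Y t \<omega>))"
proof -
  define C where "C = completion (N1 \<Otimes>\<^sub>M M)"
  have Zm: "\<And>t. t \<ge> 0 \<Longrightarrow> Z t \<in> borel_measurable N1" using SL unfolding same_law_def by auto
  have Fm: "(\<lambda>q. Z t (fst q) + Y t (snd q)) \<in> borel_measurable (N1 \<Otimes>\<^sub>M M)" if "t \<ge> 0" for t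
  proof -
    have "Y t \<in> borel_measurable M" using Ym that by auto
    then show ?thesis using Zm[OF that] by measurable
  qed
  have coord: "(\<lambda>p. prj p t) \<in> borel_measurable S" if "t \<ge> 0" for t
  proof (rule measurableI)
    fix A :: "real set" assume A: "A \<in> sets borel"
    have "f -` ((\<lambda>p. prj p t) -` A \<inter> space S) \<inter> space C = (\<lambda>q. Z t (fst q) + Y t (snd q)) -` A \<inter> space C"
      using spS prjf by auto
    also have "\<dots> \<in> sets C" unfolding C_def
      using measurable_completion[OF Fm[OF that]] A by (rule measurable_sets)
    finally show "(\<lambda>p. prj p t) -` A \<inter> space S \<in> sets S" using Sgen unfolding C_def by blast
  qed simp
  show ?thesis unfolding same_law_def
  proof (intro conjI allI impI)
    fix t :: real assume "t \<ge> 0"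
    then show "(\<lambda>p. prj p t) \<in> borel_measurable (distr (completion (N1 \<Otimes>\<^sub>M M)) S f)"
      using coord by (simp add: measurable_distr_eq1)
  next
    fix t :: real assume "t \<ge> 0"
    then have "X t \<in> borel_measurable M" "Y t \<in> borel_measurable M" using Xm Ym by auto
    then show "(\<lambda>\<omega>. c + (X t \<omega> + Y t \<omega>)) \<in> borel_measurable M" by measurable
  next
    fix J :: "real set" assume J: "finite J \<and> J \<subseteq> {0..}"
    have rm: "(\<lambda>p. \<lambda>t\<in>J. prj p t) \<in> measurable S (PiM J (\<lambda>_. borel))"
      using J coord by (auto intro!: measurable_restrict)
    have rm2: "(\<lambda>q. \<lambda>t\<in>J. Z t (fst q) + Y t (snd q)) \<in> measurable (N1 \<Otimes>\<^sub>M M) (PiM J (\<lambda>_. borel))"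
      using J Fm by (auto intro!: measurable_restrict)
    have "distr (distr C S f) (PiM J (\<lambda>_. borel)) (\<lambda>p. \<lambda>t\<in>J. prj p t)
        = distr C (PiM J (\<lambda>_. borel)) ((\<lambda>p. \<lambda>t\<in>J. prj p t) \<circ> f)"
      using distr_distr[OF rm fm] unfolding C_def .
    also have "\<dots> = distr C (PiM J (\<lambda>_. borel)) (\<lambda>q. \<lambda>t\<in>J. Z t (fst q) + Y t (snd q))"
      by (rule distr_cong) (auto simp: prjf)
    also have "\<dots> = distr (N1 \<Otimes>\<^sub>M M) (PiM J (\<lambda>_. borel)) (\<lambda>q. \<lambda>t\<in>J. Z t (fst q) + Y t (snd q))"
      unfolding C_def by (rule distr_completion[OF rm2])
    also have "\<dots> = distr M (PiM J (\<lambda>_. borel)) (\<lambda>\<omega>. \<lambda>t\<in>J. c + (X t \<omega> + Y t \<omega>))"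
      using law_sum[OF PM PN1 SL Ym ind] J by blast
    finally show "distr (distr (completion (N1 \<Otimes>\<^sub>M M)) S f) (PiM J (\<lambda>_. borel)) (\<lambda>\<omega>. \<lambda>t\<in>J. prj \<omega> t)
        = distr M (PiM J (\<lambda>_. borel)) (\<lambda>\<omega>. \<lambda>t\<in>J. c + (X t \<omega> + Y t \<omega>))"
      unfolding C_def .
  qed
qed

theorem corollary3p4:
  assumes "levy_process M X"
    and "levy_process M Y"
    and "prob_space.indep_var M (PiM {0..} (\<lambda>_. borel)) (path_of X)
                                (PiM {0..} (\<lambda>_. borel)) (path_of Y)"
    and "local_coupling_property M X"
  shows "local_coupling_property M (\<lambda>t \<omega>. X t \<omega> + Y t \<omega>)"
proof -
  have PM: "prob_space M" and Xm: "\<forall>t\<ge>0. X t \<in> borel_measurable M"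
    using assms(1) unfolding levy_process_def by auto
  have Ym: "\<forall>t\<ge>0. Y t \<in> borel_measurable M" and Ycad: "AE \<omega> in M. cadlag (\<lambda>t. Y t \<omega>)"
    using assms(2) unfolding levy_process_def by auto
  note ind = assms(3)
  interpret M: prob_space M by fact
  show ?thesis unfolding local_coupling_property_def
  proof (intro allI impI)
    fix x e :: real assume e: "e > 0"
    obtain \<delta> where d: "\<delta> > 0" and dd: "\<And>y. \<bar>y - x\<bar> < \<delta> \<Longrightarrow> good_coupling_exists M X x y e"
      using assms(4) e unfolding local_coupling_property_def by blast
    show "\<exists>\<delta>>0. \<forall>y. \<bar>y - x\<bar> < \<delta> \<longrightarrow> good_coupling_exists M (\<lambda>t \<omega>. X t \<omega> + Y t \<omega>) x y e"
    proof (intro exI[of _ \<delta>] conjI allI impI d)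
      fix y assume "\<bar>y - x\<bar> < \<delta>"
      from dd[OF this] obtain N1 :: "((real \<Rightarrow> real) \<times> (real \<Rightarrow> real)) measure" and Xc Yc where
        PN1: "prob_space N1" and SLx: "same_law N1 Xc M (\<lambda>t \<omega>. x + X t \<omega>)"
        and SLy: "same_law N1 Yc M (\<lambda>t \<omega>. y + X t \<omega>)"
        and cad1: "AE \<omega> in N1. cadlag (\<lambda>t. Xc t \<omega>) \<and> cadlag (\<lambda>t. Yc t \<omega>)"
        and Em: "{\<omega>\<in>space N1. coupling_time Xc Yc \<omega> > ereal e} \<in> sets N1"
        and Elt: "measure N1 {\<omega>\<in>space N1. coupling_time Xc Yc \<omega> > ereal e} < e"
        unfolding good_coupling_exists_def by blast
      interpret N1: prob_space N1 by fact
      interpret P: pair_prob_space N1 M by unfold_locales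
      define C where "C = completion (N1 \<Otimes>\<^sub>M M)"
      define f where "f = (\<lambda>q. (\<lambda>t. Xc t (fst q) + Y t (snd q), \<lambda>t. Yc t (fst q) + Y t (snd q)))"
      define G where "G = {A. f -` A \<inter> space C \<in> sets C}"
      define S where "S = measure_of UNIV G (\<lambda>_. 0)"
      define N where "N = distr C S f"
      have spS: "space S = UNIV" unfolding S_def by (simp add: space_measure_of_conv)
      have GS: "A \<in> sets S" if "f -` A \<inter> space C \<in> sets C" for A
        using that unfolding S_def G_def by (auto intro: sigma_sets.Basic)
      have fm: "f \<in> measurable C S" unfolding S_def
        by (rule measurable_measure_of) (auto simp: G_def)
      have spN: "space N = UNIV" unfolding N_def using spS by simp
      have sN: "sets N = sets S" unfolding N_def by simp
      have PC: "prob_space C" unfolding C_def by (rule P.prob_space_completion)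
      have PN: "prob_space N" unfolding N_def using prob_space.prob_space_distr[OF PC fm] .
      have spC: "space C = space N1 \<times> space M" unfolding C_def by (simp add: space_pair_measure)
      have fsnd: "snd (f q) t = Yc t (fst q) + Y t (snd q)" for q t
        unfolding f_def by simp
      have ffst: "fst (f q) t = Xc t (fst q) + Y t (snd q)" for q t
        unfolding f_def by simp
      have L1: "same_law N (\<lambda>t p. fst p t) M (\<lambda>t \<omega>. x + (X t \<omega> + Y t \<omega>))"
        unfolding N_def C_def
        by (rule transfer_law[where prj=fst, OF PM PN1 SLx Ym Xm ind fm[unfolded C_def] _ spS])
           (auto intro: GS[unfolded C_def] ffst)
      have L2: "same_law N (\<lambda>t p. snd p t) M (\<lambda>t \<omega>. y + (X t \<omega> + Y t \<omega>))"
        unfolding N_def C_def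
        by (rule transfer_law[where prj=snd, OF PM PN1 SLy Ym Xm ind fm[unfolded C_def] _ spS])
           (auto intro: GS[unfolded C_def] fsnd)
      from cad1 obtain B1 where B1: "{\<omega>\<in>space N1. \<not> (cadlag (\<lambda>t. Xc t \<omega>) \<and> cadlag (\<lambda>t. Yc t \<omega>))} \<subseteq> B1"
        "B1 \<in> null_sets N1" unfolding eventually_ae_filter by blast
      from Ycad obtain B2 where B2: "{\<omega>\<in>space M. \<not> cadlag (\<lambda>t. Y t \<omega>)} \<subseteq> B2"
        "B2 \<in> null_sets M" unfolding eventually_ae_filter by blast
      define Bad where "Bad = {p :: (real \<Rightarrow> real) \<times> (real \<Rightarrow> real). \<not> (cadlag (\<lambda>t. fst p t) \<and> cadlag (\<lambda>t. snd p t))}"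
      have nullU: "B1 \<times> space M \<union> space N1 \<times> B2 \<in> null_sets (N1 \<Otimes>\<^sub>M M)"
        using B1(2) B2(2) by (intro null_sets.Un M.times_in_null_sets1 M.times_in_null_sets2) auto
      have sub: "f -` Bad \<inter> space C \<subseteq> B1 \<times> space M \<union> space N1 \<times> B2"
      proof
        fix q assume q: "q \<in> f -` Bad \<inter> space C"
        then have "q \<in> space N1 \<times> space M" using spC by simp
        then have qs: "fst q \<in> space N1" "snd q \<in> space M" by (simp_all add: mem_Times_iff)
        show "q \<in> B1 \<times> space M \<union> space N1 \<times> B2"
        proof (rule ccontr)
          assume "q \<notin> B1 \<times> space M \<union> space N1 \<times> B2"
          then have n1: "fst q \<notin> B1" and n2: "snd q \<notin> B2" using qs by (simp_all add: mem_Times_iff)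
          have c1: "cadlag (\<lambda>t. Xc t (fst q)) \<and> cadlag (\<lambda>t. Yc t (fst q))"
            using B1(1) n1 qs(1) by blast
          have c2: "cadlag (\<lambda>t. Y t (snd q))"
            using B2(1) n2 qs(2) by blast
          from c1 c2 have "cadlag (\<lambda>t. Xc t (fst q))" "cadlag (\<lambda>t. Yc t (fst q))" "cadlag (\<lambda>t. Y t (snd q))"
            by auto
          then have "f q \<notin> Bad" unfolding Bad_def f_def by (simp add: cadlag_add)
          then show False using q by simp
        qed
      qed
      have nullC: "f -` Bad \<inter> space C \<in> null_sets C"
        unfolding C_def
        by (rule null_sets_completion_subset[OF sub[unfolded C_def] null_sets_completionI[OF nullU]])
      have BadN: "Bad \<in> null_sets N"
      proof -
        have "Bad \<in> sets S" using GS[OF null_setsD2[OF nullC]] .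
        moreover have "emeasure N Bad = emeasure C (f -` Bad \<inter> space C)"
          unfolding N_def using emeasure_distr[OF fm] \<open>Bad \<in> sets S\<close> by blast
        ultimately show ?thesis using nullC sN by (simp add: null_sets_def)
      qed
      have cadN: "AE p in N. cadlag (\<lambda>t. fst p t) \<and> cadlag (\<lambda>t. snd p t)"
        by (rule AE_I'[OF BadN]) (auto simp: Bad_def)
      define E1 where "E1 = {\<omega>\<in>space N1. coupling_time Xc Yc \<omega> > ereal e}"
      define E where "E = {p\<in>space N. coupling_time (\<lambda>t p. fst p t) (\<lambda>t p. snd p t) p > ereal e}"
      have ct: "coupling_time (\<lambda>t p. fst p t) (\<lambda>t p. snd p t) (f q) = coupling_time Xc Yc (fst q)" for q
        unfolding coupling_time_def f_def by simp
      have pre: "f -` E \<inter> space C = E1 \<times> space M"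
      proof (intro set_eqI iffI)
        fix q assume "q \<in> f -` E \<inter> space C"
        then have "q \<in> space N1 \<times> space M" "coupling_time Xc Yc (fst q) > ereal e"
          using spC ct unfolding E_def by auto
        then show "q \<in> E1 \<times> space M" unfolding E1_def by (simp add: mem_Times_iff)
      next
        fix q assume "q \<in> E1 \<times> space M"
        then have "q \<in> space N1 \<times> space M" "coupling_time Xc Yc (fst q) > ereal e"
          unfolding E1_def by (auto simp: mem_Times_iff)
        then show "q \<in> f -` E \<inter> space C"
          using spC ct spN unfolding E_def by simp
      qed
      have E1m: "E1 \<times> space M \<in> sets (N1 \<Otimes>\<^sub>M M)" using Em unfolding E1_def by auto
      have EC: "f -` E \<inter> space C \<in> sets C" using E1m unfolding pre unfolding C_def by simp
      have ES: "E \<in> sets S" using GS[OF EC] .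
      have "measure N E = measure C (E1 \<times> space M)"
        unfolding N_def using measure_distr[OF fm ES] pre by simp
      also have "\<dots> = measure (N1 \<Otimes>\<^sub>M M) (E1 \<times> space M)"
        unfolding C_def using E1m by simp
      also have "\<dots> = measure N1 E1"
        using Em unfolding E1_def
        by (simp add: measure_def M.emeasure_pair_measure_Times M.emeasure_space_1)
      finally have Elt2: "measure N E < e" using Elt unfolding E1_def by simp
      show "good_coupling_exists M (\<lambda>t \<omega>. X t \<omega> + Y t \<omega>) x y e"
        unfolding good_coupling_exists_def
        apply (rule exI[of _ N], rule exI[of _ "\<lambda>t p. fst p t"], rule exI[of _ "\<lambda>t p. snd p t"])
        apply (intro conjI PN L1 L2 cadN)
        using ES sN Elt2 unfolding E_def by simp_all
    qed
  qed
qed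

end
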